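(* Let $A$ be an effect on a complex separable Hilbert space $\mathcal{H}$, with spectrum $\sigma_A$, and write $A'=I-A$. Then the operator $AA'$ satisfies: (a) $\mathbb{O}\le AA'\le\tfrac14 I$; (b) $\tfrac14-\max\bigl\{(\|A\|-\tfrac12)^2,(\|A'\|-\tfrac12)^2\bigr\}\le\|AA'\|\le\tfrac14$; (c) $\|AA'\|=\tfrac14$ if and only if $\tfrac12\in\sigma_A$; (d) $\|I-AA'\|=\tfrac34+\max\bigl\{(\|A\|-\tfrac12)^2,(\|A'\|-\tfrac12)^2\bigr\}$.
   Context: An effect is a selfadjoint bounded operator $A$ with $\mathbb{O}\le A\le I$. Norms are operator norms. *)

theory Defs
  imports "HOL-Analysis.Analysis"
begin

text \<open>A complex Hilbert space is modelled on an abelian group type 'h together with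
  a complex scalar multiplication sm and an inner product ip, which is
  conjugate-linear in the first and linear in the second argument.\<close>

definition hnorm :: "('h \<Rightarrow> 'h \<Rightarrow> complex) \<Rightarrow> 'h \<Rightarrow> real" where
  "hnorm ip x = sqrt (Re (ip x x))"

definition complex_inner_product :: "(complex \<Rightarrow> 'h::ab_group_add \<Rightarrow> 'h) \<Rightarrow> ('h \<Rightarrow> 'h \<Rightarrow> complex) \<Rightarrow> bool" where
  "complex_inner_product sm ip \<longleftrightarrow>
     (\<forall>x y z. ip x (y + z) = ip x y + ip x z) \<and>
     (\<forall>c x y. ip x (sm c y) = c * ip x y) \<and>
     (\<forall>x y. ip y x = cnj (ip x y)) \<and>
     (\<forall>x. Im (ip x x) = 0 \<and> Re (ip x x) \<ge> 0) \<and>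
     (\<forall>x. ip x x = 0 \<longrightarrow> x = 0)"

definition hcomplete :: "('h::ab_group_add \<Rightarrow> 'h \<Rightarrow> complex) \<Rightarrow> bool" where
  "hcomplete ip \<longleftrightarrow>
     (\<forall>X :: nat \<Rightarrow> 'h.
        (\<forall>e>0. \<exists>N. \<forall>m\<ge>N. \<forall>n\<ge>N. hnorm ip (X m - X n) < e) \<longrightarrow>
        (\<exists>L. \<forall>e>0. \<exists>N. \<forall>n\<ge>N. hnorm ip (X n - L) < e))"

definition hseparable :: "('h::ab_group_add \<Rightarrow> 'h \<Rightarrow> complex) \<Rightarrow> bool" where
  "hseparable ip \<longleftrightarrow> (\<exists>D. countable D \<and> (\<forall>x. \<forall>e>0. \<exists>d\<in>D. hnorm ip (x - d) < e))"

definition complex_separable_hilbert_space ::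
  "(complex \<Rightarrow> 'h::ab_group_add \<Rightarrow> 'h) \<Rightarrow> ('h \<Rightarrow> 'h \<Rightarrow> complex) \<Rightarrow> bool" where
  "complex_separable_hilbert_space sm ip \<longleftrightarrow>
     vector_space sm \<and> complex_inner_product sm ip \<and> hcomplete ip \<and> hseparable ip"

definition bounded_op :: "(complex \<Rightarrow> 'h::ab_group_add \<Rightarrow> 'h) \<Rightarrow> ('h \<Rightarrow> 'h \<Rightarrow> complex) \<Rightarrow> ('h \<Rightarrow> 'h) \<Rightarrow> bool" where
  "bounded_op sm ip T \<longleftrightarrow>
     (\<forall>x y. T (x + y) = T x + T y) \<and> (\<forall>c x. T (sm c x) = sm c (T x)) \<and>
     (\<exists>K. \<forall>x. hnorm ip (T x) \<le> K * hnorm ip x)"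

definition opnorm :: "('h \<Rightarrow> 'h \<Rightarrow> complex) \<Rightarrow> ('h \<Rightarrow> 'h) \<Rightarrow> real" where
  "opnorm ip T = Sup {hnorm ip (T x) | x. hnorm ip x \<le> 1}"

definition selfadjoint :: "('h \<Rightarrow> 'h \<Rightarrow> complex) \<Rightarrow> ('h \<Rightarrow> 'h) \<Rightarrow> bool" where
  "selfadjoint ip T \<longleftrightarrow> (\<forall>x y. ip (T x) y = ip x (T y))"

definition op_le :: "('h::ab_group_add \<Rightarrow> 'h \<Rightarrow> complex) \<Rightarrow> ('h \<Rightarrow> 'h) \<Rightarrow> ('h \<Rightarrow> 'h) \<Rightarrow> bool" where
  "op_le ip S T \<longleftrightarrow> (\<forall>x. Im (ip x (T x - S x)) = 0 \<and> Re (ip x (T x - S x)) \<ge> 0)"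

definition effect :: "(complex \<Rightarrow> 'h::ab_group_add \<Rightarrow> 'h) \<Rightarrow> ('h \<Rightarrow> 'h \<Rightarrow> complex) \<Rightarrow> ('h \<Rightarrow> 'h) \<Rightarrow> bool" where
  "effect sm ip A \<longleftrightarrow> bounded_op sm ip A \<and> selfadjoint ip A \<and>
     op_le ip (\<lambda>x. 0) A \<and> op_le ip A (\<lambda>x. x)"

definition op_spectrum :: "(complex \<Rightarrow> 'h::ab_group_add \<Rightarrow> 'h) \<Rightarrow> ('h \<Rightarrow> 'h \<Rightarrow> complex) \<Rightarrow> ('h \<Rightarrow> 'h) \<Rightarrow> complex set" where
  "op_spectrum sm ip A = {l. \<not> (\<exists>B. bounded_op sm ip B \<and>
       (\<forall>x. B (A x - sm l x) = x) \<and> (\<forall>x. A (B x) - sm l (B x) = x))}"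

end

theory Submission imports Defs begin

lemma real_quad_cs:
  fixes a C d :: real
  assumes "C \<ge> 0" "a \<ge> 0" "d \<ge> 0" and q: "\<And>t. 0 \<le> a - 2*t*C + t^2*C*d"
  shows "C \<le> a * d"
proof (cases "C = 0")
  case True then show ?thesis using assms by simp
next
  case False
  show ?thesis
  proof (cases "d = 0")
    case True
    have "0 \<le> a - 2*((a+1)/(2*C))*C" using q[of "(a+1)/(2*C)"] True by simp
    also have "\<dots> = -1" using False by (simp add: field_simps)
    finally show ?thesis by simp
  next
    case False
    then have dp: "d > 0" using assms by simp
    have "0 \<le> a - 2*(1/d)*C + (1/d)^2*C*d" using q[of "1/d"] .
    also have "\<dots> = a - C/d" using dp by (simp add: field_simps power2_eq_square)
    finally show ?thesis using dp by (simp add: field_simps)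
  qed
qed

locale hspace =
  fixes sm :: "complex \<Rightarrow> 'h::ab_group_add \<Rightarrow> 'h" and ip :: "'h \<Rightarrow> 'h \<Rightarrow> complex"
  assumes vs: "vector_space sm" and cip: "complex_inner_product sm ip"
begin

sublocale vector_space sm by (rule vs)

lemma ip_add_right: "ip x (y + z) = ip x y + ip x z"
  using cip unfolding complex_inner_product_def by blast
lemma ip_scale_right: "ip x (sm c y) = c * ip x y"
  using cip unfolding complex_inner_product_def by blast
lemma ip_conj: "ip y x = cnj (ip x y)"
  using cip unfolding complex_inner_product_def by blast
lemma ip_self_Im: "Im (ip x x) = 0"
  using cip unfolding complex_inner_product_def by blast
lemma ip_self_Re: "Re (ip x x) \<ge> 0"
  using cip unfolding complex_inner_product_def by blast
lemma ip_self_0: "ip x x = 0 \<Longrightarrow> x = 0"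
  using cip unfolding complex_inner_product_def by blast

lemma ip_add_left: "ip (x + y) z = ip x z + ip y z"
  by (metis ip_conj ip_add_right complex_cnj_add)
lemma ip_scale_left: "ip (sm c x) y = cnj c * ip x y"
  by (metis ip_conj ip_scale_right complex_cnj_mult)
lemma ip_zero_right [simp]: "ip x 0 = 0"
  using ip_add_right[of x 0 0] by simp
lemma ip_zero_left [simp]: "ip 0 x = 0"
  using ip_add_left[of 0 0 x] by simp
lemma ip_diff_right: "ip x (y - z) = ip x y - ip x z"
  using ip_add_right[of x "y - z" z] by simp
lemma ip_diff_left: "ip (y - z) x = ip y x - ip z x"
  using ip_add_left[of "y - z" z x] by simp
lemma ip_minus_right: "ip x (- y) = - ip x y"
  using ip_diff_right[of x 0 y] by simp
lemma ip_minus_left: "ip (- y) x = - ip y x"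
  using ip_diff_left[of 0 y x] by simp

lemmas ip_simps = ip_add_right ip_add_left ip_scale_left ip_scale_right ip_diff_right ip_diff_left
  ip_minus_right ip_minus_left

lemma hnorm_sq: "(hnorm ip x)^2 = Re (ip x x)"
  unfolding hnorm_def using ip_self_Re by simp
lemma hnorm_nonneg: "hnorm ip x \<ge> 0"
  unfolding hnorm_def using ip_self_Re by simp
lemma ip_self_eq: "ip x x = complex_of_real ((hnorm ip x)^2)"
  using hnorm_sq ip_self_Im by (simp add: complex_eq_iff)
lemma hnorm_zero [simp]: "hnorm ip 0 = 0"
  unfolding hnorm_def by simp
lemma hnorm_eq_0: "hnorm ip x = 0 \<longleftrightarrow> x = 0"
  by (metis hnorm_zero ip_self_0 ip_self_eq of_real_0 zero_eq_power2)

definition "linop Q \<longleftrightarrow> (\<forall>x y. Q (x + y) = Q x + Q y) \<and> (\<forall>c x. Q (sm c x) = sm c (Q x))"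

lemma linop_diff: "linop Q \<Longrightarrow> Q (x - y) = Q x - Q y"
  unfolding linop_def by (metis add_diff_cancel diff_add_cancel)
lemma linop_add: "linop Q \<Longrightarrow> Q (x + y) = Q x + Q y"
  unfolding linop_def by blast
lemma linop_scale: "linop Q \<Longrightarrow> Q (sm c x) = sm c (Q x)"
  unfolding linop_def by blast
lemma linop_zero: "linop Q \<Longrightarrow> Q 0 = 0"
  using linop_diff[of Q 0 0] by simp

lemma cs_op:
  assumes L: "linop Q" and sa: "\<And>x y. ip (Q x) y = ip x (Q y)" and pos: "\<And>x. Re (ip x (Q x)) \<ge> 0"
  shows "(cmod (ip x (Q y)))^2 \<le> Re (ip x (Q x)) * Re (ip y (Q y))"
proof -
  define c where "c = ip x (Q y)"
  have yx: "ip y (Q x) = cnj c" unfolding c_def by (metis sa ip_conj)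
  have Cc: "c * cnj c = complex_of_real ((cmod c)^2)"
    using complex_norm_square[of c] by simp
  have "0 \<le> Re (ip x (Q x)) - 2*t*(cmod c)^2 + t^2*(cmod c)^2 * Re (ip y (Q y))" for t :: real
  proof -
    define w where "w = x - sm (of_real t * cnj c) y"
    have "ip w (Q w) = ip x (Q x) - (of_real t * cnj c) * ip x (Q y)
        - cnj (of_real t * cnj c) * ip y (Q x) + cnj (of_real t * cnj c) * ((of_real t * cnj c) * ip y (Q y))"
      unfolding w_def by (simp add: linop_diff[OF L] linop_scale[OF L] ip_simps algebra_simps)
    also have "\<dots> = ip x (Q x) - 2 * of_real t * (c * cnj c) + (of_real t)^2 * (c * cnj c) * ip y (Q y)"
      unfolding yx c_def[symmetric] by (simp add: algebra_simps power2_eq_square)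
    finally have "Re (ip w (Q w)) = Re (ip x (Q x)) - 2*t*(cmod c)^2 + t^2*(cmod c)^2 * Re (ip y (Q y))"
      unfolding Cc by (simp add: power2_eq_square)
    then show ?thesis using pos[of w] by simp
  qed
  then show ?thesis unfolding c_def[symmetric]
    by (intro real_quad_cs) (use pos in auto)
qed

lemma cs: "cmod (ip x y) \<le> hnorm ip x * hnorm ip y"
proof -
  have L: "linop (\<lambda>x. x)" unfolding linop_def by simp
  have "(cmod (ip x y))^2 \<le> (hnorm ip x * hnorm ip y)^2"
    using cs_op[OF L, of x y] ip_self_Re by (simp add: hnorm_sq power_mult_distrib)
  then show ?thesis using hnorm_nonneg by (meson mult_nonneg_nonneg power2_le_imp_le)
qed

lemma hnorm_scale: "hnorm ip (sm c x) = cmod c * hnorm ip x"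
proof -
  have "ip (sm c x) (sm c x) = (cnj c * c) * ip x x" by (simp add: ip_simps)
  also have "cnj c * c = complex_of_real ((cmod c)^2)" using complex_norm_square[of c] by (simp add: mult.commute)
  finally have "(hnorm ip (sm c x))^2 = (cmod c * hnorm ip x)^2"
    by (simp add: hnorm_sq power_mult_distrib)
  then show ?thesis using hnorm_nonneg by (simp add: power2_eq_iff_nonneg)
qed

lemma hnorm_triangle: "hnorm ip (x + y) \<le> hnorm ip x + hnorm ip y"
proof -
  have "ip (x+y) (x+y) = ip x x + ip y y + (ip x y + cnj (ip x y))"
    by (simp add: ip_simps) (metis ip_conj)
  then have "(hnorm ip (x+y))^2 = (hnorm ip x)^2 + (hnorm ip y)^2 + 2 * Re (ip x y)"
    by (simp add: hnorm_sq)
  also have "Re (ip x y) \<le> hnorm ip x * hnorm ip y"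
    using cs[of x y] complex_Re_le_cmod order_trans by blast
  finally have "(hnorm ip (x+y))^2 \<le> (hnorm ip x + hnorm ip y)^2"
    by (simp add: power2_sum)
  then show ?thesis using hnorm_nonneg by (meson add_nonneg_nonneg power2_le_imp_le)
qed

lemma hnorm_diff_sym: "hnorm ip (x - y) = hnorm ip (y - x)"
  using hnorm_scale[of "-1" "x - y"] by simp

lemma opnorm_le:
  assumes b: "\<And>x. hnorm ip (T x) \<le> K * hnorm ip x" and nt: "\<exists>x::'h. x \<noteq> 0"
  shows "opnorm ip T \<le> K"
proof -
  obtain x0 :: 'h where "x0 \<noteq> 0" using nt by blast
  then have "hnorm ip x0 > 0" using hnorm_nonneg hnorm_eq_0 by (metis order_le_less)
  moreover have "0 \<le> K * hnorm ip x0" using b[of x0] hnorm_nonneg order_trans by blast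
  ultimately have K0: "K \<ge> 0" by (simp add: zero_le_mult_iff)
  show ?thesis unfolding opnorm_def
  proof (rule cSup_least)
    show "{hnorm ip (T x) |x. hnorm ip x \<le> 1} \<noteq> {}" by (auto intro: exI[of _ 0])
  next
    fix z assume "z \<in> {hnorm ip (T x) |x. hnorm ip x \<le> 1}"
    then obtain x where "z = hnorm ip (T x)" "hnorm ip x \<le> 1" by blast
    then show "z \<le> K" using b[of x] K0 by (meson mult_left_le order_trans)
  qed
qed

lemma opnorm_ge:
  assumes L: "linop T" and b: "\<And>x. hnorm ip (T x) \<le> K * hnorm ip x"
  shows "hnorm ip (T x) \<le> opnorm ip T * hnorm ip x"
proof (cases "x = 0")
  case True then show ?thesis using linop_zero[OF L] by simp
next
  case False
  define v where "v = hnorm ip x"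
  have vp: "v > 0" unfolding v_def using False hnorm_nonneg hnorm_eq_0 by (metis order_le_less)
  have K0: "K \<ge> 0" using b[of x] vp hnorm_nonneg[of "T x"] unfolding v_def[symmetric]
    by (metis dual_order.trans less_le_not_le mult_less_0_iff not_le_imp_less)
  define x' where "x' = sm (of_real (1/v)) x"
  have cm: "cmod (of_real (1/v)) = 1/v" using vp by (simp only: norm_of_real) simp
  have nx': "hnorm ip x' = 1" unfolding x'_def hnorm_scale cm using vp by (simp add: v_def)
  have Tx': "hnorm ip (T x') = hnorm ip (T x) / v"
    unfolding x'_def linop_scale[OF L] hnorm_scale cm using vp by simp
  have "hnorm ip (T x') \<le> opnorm ip T" unfolding opnorm_def
  proof (rule cSup_upper)
    show "hnorm ip (T x') \<in> {hnorm ip (T x) |x. hnorm ip x \<le> 1}" using nx' by auto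
    show "bdd_above {hnorm ip (T x) |x. hnorm ip x \<le> 1}"
      using b K0 by (intro bdd_aboveI[of _ K]) (auto, meson mult_left_le order_trans)
  qed
  then show ?thesis using vp Tx' by (simp add: v_def field_simps)
qed

lemma pos_op_sq:
  assumes L: "linop Q" and sa: "\<And>x y. ip (Q x) y = ip x (Q y)" and pos: "\<And>x. Re (ip x (Q x)) \<ge> 0"
    and r: "\<And>x. Re (ip x (Q x)) \<le> r * (hnorm ip x)^2" and r0: "r \<ge> 0"
  shows "(hnorm ip (Q x))^2 \<le> r * Re (ip x (Q x))"
proof -
  have c: "(cmod (ip x (Q (Q x))))^2 \<le> Re (ip x (Q x)) * Re (ip (Q x) (Q (Q x)))"
    by (rule cs_op[OF L sa pos])
  have "ip x (Q (Q x)) = ip (Q x) (Q x)" by (simp add: sa)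
  then have e: "cmod (ip x (Q (Q x))) = (hnorm ip (Q x))^2" by (simp add: ip_self_eq norm_power)
  have "((hnorm ip (Q x))^2)^2 \<le> Re (ip x (Q x)) * Re (ip (Q x) (Q (Q x)))"
    using c e by simp
  also have "\<dots> \<le> Re (ip x (Q x)) * (r * (hnorm ip (Q x))^2)"
    by (intro mult_left_mono r pos)
  also have "\<dots> = (r * Re (ip x (Q x))) * (hnorm ip (Q x))^2" by (simp add: algebra_simps)
  finally have *: "((hnorm ip (Q x))^2)^2 \<le> (r * Re (ip x (Q x))) * (hnorm ip (Q x))^2" .
  show ?thesis
  proof (cases "hnorm ip (Q x) = 0")
    case False
    then have "(hnorm ip (Q x))^2 > 0" by simp
    then show ?thesis using * 
      using mult_le_cancel_right_pos[of "(hnorm ip (Q x))^2" "(hnorm ip (Q x))^2" "r * Re (ip x (Q x))"]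
      by (simp add: power2_eq_square[of "(hnorm ip (Q x))^2"])
  qed (use r0 pos in simp)
qed

lemma pos_op_bound:
  assumes L: "linop Q" and sa: "\<And>x y. ip (Q x) y = ip x (Q y)" and pos: "\<And>x. Re (ip x (Q x)) \<ge> 0"
    and r: "\<And>x. Re (ip x (Q x)) \<le> r * (hnorm ip x)^2" and r0: "r \<ge> 0"
  shows "hnorm ip (Q x) \<le> r * hnorm ip x"
proof -
  have "(hnorm ip (Q x))^2 \<le> r * Re (ip x (Q x))" by (rule pos_op_sq[OF assms])
  also have "\<dots> \<le> r * (r * (hnorm ip x)^2)" by (intro mult_left_mono r r0)
  also have "\<dots> = (r * hnorm ip x)^2" by (simp add: power2_eq_square algebra_simps)
  finally have "(hnorm ip (Q x))^2 \<le> (r * hnorm ip x)^2" .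
  then show ?thesis using r0 hnorm_nonneg by (meson mult_nonneg_nonneg power2_le_imp_le)
qed

lemma pos_opnorm_le:
  assumes L: "linop Q" and sa: "\<And>x y. ip (Q x) y = ip x (Q y)" and pos: "\<And>x. Re (ip x (Q x)) \<ge> 0"
    and r: "\<And>x. Re (ip x (Q x)) \<le> r * (hnorm ip x)^2" and r0: "r \<ge> 0" and nt: "\<exists>x::'h. x \<noteq> 0"
  shows "opnorm ip Q \<le> r"
  by (rule opnorm_le[OF pos_op_bound[OF assms(1-5)] nt])

lemma linop_id: "linop (\<lambda>x. x)" unfolding linop_def by simp
lemma linop_comp: "linop f \<Longrightarrow> linop g \<Longrightarrow> linop (\<lambda>x. f (g x))" unfolding linop_def by simp
lemma linop_sub: "linop f \<Longrightarrow> linop g \<Longrightarrow> linop (\<lambda>x. f x - g x)"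
  unfolding linop_def by (simp add: scale_right_diff_distrib)
lemma linop_smul: "linop (\<lambda>x. sm c x)"
  unfolding linop_def by (auto simp: scale_right_distrib intro: scale_left_commute)

lemma hmetric: "Metric_space UNIV (\<lambda>x y. hnorm ip (x - y))"
  unfolding Metric_space_def
proof (intro conjI allI impI)
  fix x y z :: 'h
  show "0 \<le> hnorm ip (x - y)" by (rule hnorm_nonneg)
  show "hnorm ip (x - y) = hnorm ip (y - x)" by (rule hnorm_diff_sym)
  show "hnorm ip (x - y) = 0 \<longleftrightarrow> x = y" by (simp add: hnorm_eq_0)
  have "x - z = (x - y) + (y - z)" by simp
  then show "hnorm ip (x - z) \<le> hnorm ip (x - y) + hnorm ip (y - z)" using hnorm_triangle by metis
qed

lemma contraction_fix:
  assumes hc: "hcomplete ip" and k: "k < 1" and con: "\<And>x y. hnorm ip (F x - F y) \<le> k * hnorm ip (x - y)"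
  obtains x where "F x = x"
proof -
  interpret M: Metric_space UNIV "\<lambda>x y. hnorm ip (x - y)" by (rule hmetric)
  have mc: "M.mcomplete"
    unfolding M.mcomplete_def
  proof (intro allI impI)
    fix \<sigma> assume C: "M.MCauchy \<sigma>"
    have cau: "\<forall>e>0. \<exists>N. \<forall>m\<ge>N. \<forall>n\<ge>N. hnorm ip (\<sigma> m - \<sigma> n) < e"
    proof (intro allI impI)
      fix e :: real assume "e > 0"
      then obtain N where "\<forall>n n'. N \<le> n \<longrightarrow> N \<le> n' \<longrightarrow> hnorm ip (\<sigma> n - \<sigma> n') < e"
        using C unfolding M.MCauchy_def by auto
      then show "\<exists>N. \<forall>m\<ge>N. \<forall>n\<ge>N. hnorm ip (\<sigma> m - \<sigma> n) < e" by auto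
    qed
    obtain L where L: "\<forall>e>0. \<exists>N. \<forall>n\<ge>N. hnorm ip (\<sigma> n - L) < e"
      using hc[unfolded hcomplete_def, THEN spec, of \<sigma>] cau by blast
    show "\<exists>x. limitin M.mtopology \<sigma> x sequentially"
      unfolding M.limit_metric_sequentially using L by auto
  qed
  have fim: "F \<in> UNIV \<rightarrow> UNIV" by simp
  obtain x where "x \<in> UNIV" "F x = x"
    using M.Banach_fixedpoint_thm[OF mc UNIV_not_empty fim k con] by blast
  then show ?thesis using that by blast
qed

lemma quad_le_opnorm:
  assumes L: "linop T" and b: "\<And>x. hnorm ip (T x) \<le> K * hnorm ip x"
  shows "Re (ip x (T x)) \<le> opnorm ip T * (hnorm ip x)^2"
proof -
  have "Re (ip x (T x)) \<le> hnorm ip x * hnorm ip (T x)"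
    using cs[of x "T x"] complex_Re_le_cmod order_trans by blast
  also have "\<dots> \<le> hnorm ip x * (opnorm ip T * hnorm ip x)"
    by (intro mult_left_mono opnorm_ge[OF L b] hnorm_nonneg)
  finally show ?thesis by (simp add: power2_eq_square algebra_simps)
qed

end

context hspace
begin

lemma half_half: "sm (1/2) w + sm (1/2) w = w"
  using scale_left_distrib[of "1/2" "1/2" w, symmetric] by simp

lemma main:
  assumes nt: "\<exists>x::'h. x \<noteq> 0" and eff: "effect sm ip A" and hc: "hcomplete ip"
  defines "A' \<equiv> (\<lambda>x. x - A x)"
  shows "(op_le ip (\<lambda>x. 0) (\<lambda>x. A (A' x)) \<and> op_le ip (\<lambda>x. A (A' x)) (\<lambda>x. sm (1/4) x))
    \<and> (1/4 - max ((opnorm ip A - 1/2)\<^sup>2) ((opnorm ip A' - 1/2)\<^sup>2) \<le> opnorm ip (\<lambda>x. A (A' x))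
         \<and> opnorm ip (\<lambda>x. A (A' x)) \<le> 1/4)
    \<and> (opnorm ip (\<lambda>x. A (A' x)) = 1/4 \<longleftrightarrow> (1/2 :: complex) \<in> op_spectrum sm ip A)
    \<and> opnorm ip (\<lambda>x. x - A (A' x)) = 3/4 + max ((opnorm ip A - 1/2)\<^sup>2) ((opnorm ip A' - 1/2)\<^sup>2)"
proof -
  have bo: "bounded_op sm ip A" and sa: "selfadjoint ip A" and le0: "op_le ip (\<lambda>x. 0) A"
    and le1: "op_le ip A (\<lambda>x. x)" using eff unfolding effect_def by auto
  have LA: "linop A" using bo unfolding bounded_op_def linop_def by blast
  have saA: "\<And>x y. ip (A x) y = ip x (A y)" using sa unfolding selfadjoint_def by blast
  define n where "n x = (hnorm ip x)^2" for x
  define a where "a x = Re (ip x (A x))" for x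
  define b where "b x = (hnorm ip (A x))^2" for x
  have ipxx: "ip x x = of_real (n x)" for x unfolding n_def by (rule ip_self_eq)
  have n0: "n x \<ge> 0" for x unfolding n_def by simp
  have b0: "b x \<ge> 0" for x unfolding b_def by simp
  have aIm: "ip x (A x) = of_real (a x)" for x
    using le0 unfolding op_le_def a_def by (simp add: complex_eq_iff)
  have a0: "a x \<ge> 0" for x using le0 unfolding op_le_def a_def by simp
  have a_le: "a x \<le> n x" for x
  proof -
    have "Re (ip x (x - A x)) \<ge> 0" using le1 unfolding op_le_def by blast
    then show ?thesis by (simp add: ip_diff_right ipxx aIm)
  qed
  have posA: "Re (ip x (A x)) \<ge> 0" for x using a0 unfolding a_def .
  have qA1: "Re (ip x (A x)) \<le> 1 * (hnorm ip x)^2" for x using a_le unfolding a_def n_def by simp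
  have boundA: "hnorm ip (A x) \<le> 1 * hnorm ip x" for x
    by (rule pos_op_bound[OF LA saA posA qA1]) simp
  have b_le: "b x \<le> a x" for x
    using pos_op_sq[OF LA saA posA qA1, of x] unfolding a_def b_def by simp
  have AA: "ip x (A (A x)) = of_real (b x)" for x
    unfolding b_def by (simp add: saA[symmetric] ip_self_eq)
  have expand: "(hnorm ip (A x - sm (of_real t) x))^2 = b x - 2 * t * a x + t^2 * n x" for x t
  proof -
    have "ip (A x - sm (of_real t) x) (A x - sm (of_real t) x)
        = ip (A x) (A x) - of_real t * ip (A x) x - of_real t * ip x (A x) + of_real t * of_real t * ip x x"
      by (simp add: ip_simps algebra_simps)
    also have "\<dots> = of_real (b x - 2 * t * a x + t^2 * n x)"
    proof -
      have e1: "ip (A x) (A x) = of_real (b x)" unfolding b_def by (rule ip_self_eq)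
      have e2: "ip (A x) x = of_real (a x)" by (simp add: saA aIm)
      show ?thesis unfolding e1 e2 aIm ipxx[of x] by (simp add: power2_eq_square algebra_simps)
    qed
    finally show ?thesis by (simp add: hnorm_sq)
  qed
  have Bn: "(hnorm ip (A x - sm (1/2) x))^2 = n x / 4 - a x + b x" for x
    using expand[of x "1/2"] by (simp add: power2_eq_square)
  have LA': "linop A'" unfolding A'_def by (rule linop_sub[OF linop_id LA])
  have LP: "linop (\<lambda>x. A (A' x))" by (rule linop_comp[OF LA LA'])
  have LI: "linop (\<lambda>x. x - A (A' x))" by (rule linop_sub[OF linop_id LP])
  have A'x: "A (A' x) = A x - A (A x)" for x unfolding A'_def by (simp add: linop_diff[OF LA])
  have qA': "ip x (A' x) = of_real (n x - a x)" for x
    unfolding A'_def by (simp add: ip_diff_right ipxx aIm)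
  have qP: "ip x (A (A' x)) = of_real (a x - b x)" for x
    unfolding A'x by (simp add: ip_diff_right aIm AA)
  have qI: "ip x (x - A (A' x)) = of_real (n x - a x + b x)" for x
    by (simp add: ip_diff_right qP ipxx)
  have qQ: "ip x (sm (1/4) x - A (A' x)) = of_real (n x / 4 - a x + b x)" for x
    by (simp add: ip_diff_right ip_scale_right qP ipxx)
  have saA': "ip (A' x) y = ip x (A' y)" for x y
    unfolding A'_def by (simp add: ip_diff_right ip_diff_left saA)
  have saP: "ip (A (A' x)) y = ip x (A (A' y))" for x y
    unfolding A'x by (simp add: ip_diff_right ip_diff_left saA)
  have saI: "ip (x - A (A' x)) y = ip x (y - A (A' y))" for x y
    by (simp add: ip_diff_right ip_diff_left saP)
  have posA': "Re (ip x (A' x)) \<ge> 0" for x using a_le by (simp add: qA')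
  have posP: "Re (ip x (A (A' x))) \<ge> 0" for x using b_le by (simp add: qP)
  have posI: "Re (ip x (x - A (A' x))) \<ge> 0" for x using a_le[of x] b0[of x] by (simp add: qI)
  have Bn0: "n x / 4 - a x + b x \<ge> 0" for x using Bn[of x] by (metis zero_le_power2)
  have rA': "Re (ip x (A' x)) \<le> 1 * (hnorm ip x)^2" for x using a0[of x] by (simp add: qA' n_def)
  have rP: "Re (ip x (A (A' x))) \<le> 1/4 * (hnorm ip x)^2" for x using Bn0[of x] by (simp add: qP n_def)
  have rI: "Re (ip x (x - A (A' x))) \<le> 1 * (hnorm ip x)^2" for x using b_le[of x] by (simp add: qI n_def)
  have boundA': "hnorm ip (A' x) \<le> 1 * hnorm ip x" for x
    by (rule pos_op_bound[OF LA' saA' posA' rA']) simp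
  have boundP: "hnorm ip (A (A' x)) \<le> 1/4 * hnorm ip x" for x
    by (rule pos_op_bound[OF LP saP posP rP]) simp
  have boundI: "hnorm ip (x - A (A' x)) \<le> 1 * hnorm ip x" for x
    by (rule pos_op_bound[OF LI saI posI rI]) simp
  define MA where "MA = opnorm ip A"
  define MA' where "MA' = opnorm ip A'"
  define Pn where "Pn = opnorm ip (\<lambda>x. A (A' x))"
  define In where "In = opnorm ip (\<lambda>x. x - A (A' x))"
  have qa_le: "a x \<le> MA * n x" for x
    using quad_le_opnorm[OF LA boundA, of x] unfolding MA_def a_def n_def .
  have qa'_le: "n x - a x \<le> MA' * n x" for x
    using quad_le_opnorm[OF LA' boundA', of x] unfolding MA'_def n_def by (simp add: qA' n_def)
  have qP_le: "a x - b x \<le> Pn * n x" for x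
    using quad_le_opnorm[OF LP boundP, of x] unfolding Pn_def by (simp add: qP n_def)
  have qI_le: "n x - a x + b x \<le> In * n x" for x
    using quad_le_opnorm[OF LI boundI, of x] unfolding In_def by (simp add: qI n_def)
  have Pn_le: "Pn \<le> 1/4" unfolding Pn_def
    by (rule pos_opnorm_le[OF LP saP posP rP _ nt]) simp
  obtain x0 :: 'h where x0: "x0 \<noteq> 0" using nt by blast
  have nx0: "n x0 > 0" unfolding n_def using x0 hnorm_eq_0 hnorm_nonneg
    by (metis order_le_less zero_less_power)
  have sum1: "MA + MA' \<ge> 1"
  proof -
    have "1 * n x0 \<le> (MA + MA') * n x0" using qa_le[of x0] qa'_le[of x0] by (simp add: algebra_simps)
    then show ?thesis using nx0 by simp
  qed
  define \<beta> where "\<beta> = max ((MA - 1/2)\<^sup>2) ((MA' - 1/2)\<^sup>2)"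
  have keyB: "n x / 4 - a x + b x \<le> \<beta> * n x" for x
  proof -
    define m where "m = 1 - MA'"
    have am: "m * n x \<le> a x" for x using qa'_le[of x] unfolding m_def by (simp add: algebra_simps)
    define Q where "Q = (\<lambda>x. A x - sm (of_real m) x)"
    have LQ: "linop Q" unfolding Q_def by (rule linop_sub[OF LA linop_smul])
    have qQm: "ip x (Q x) = of_real (a x - m * n x)" for x
      unfolding Q_def by (simp add: ip_diff_right ip_scale_right aIm ipxx)
    have saQ: "ip (Q x) y = ip x (Q y)" for x y
      unfolding Q_def by (simp add: ip_diff_right ip_diff_left ip_scale_left ip_scale_right saA)
    have posQ: "Re (ip x (Q x)) \<ge> 0" for x using am[of x] by (simp add: qQm)
    have rQ: "Re (ip x (Q x)) \<le> (MA - m) * (hnorm ip x)^2" for x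
      using qa_le[of x] by (simp add: qQm n_def[symmetric] algebra_simps)
    have r0: "MA - m \<ge> 0" using sum1 unfolding m_def by simp
    have "(hnorm ip (Q x))^2 \<le> (MA - m) * Re (ip x (Q x))"
      by (rule pos_op_sq[OF LQ saQ posQ rQ r0])
    then have bm: "b x - 2 * m * a x + m^2 * n x \<le> (MA - m) * (a x - m * n x)"
      using expand[of x m] qQm[of x] unfolding Q_def by simp
    then have bm2: "b x \<le> (MA + m) * a x - MA * m * n x"
      by (simp add: algebra_simps power2_eq_square)
    show ?thesis
    proof (cases "MA + m - 1 \<ge> 0")
      case True
      have "(MA + m - 1) * a x \<le> (MA + m - 1) * (MA * n x)" by (rule mult_left_mono[OF qa_le True])
      then have "n x / 4 - a x + b x \<le> (MA - 1/2)^2 * n x" using bm2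
        by (simp add: algebra_simps power2_eq_square)
      then show ?thesis unfolding \<beta>_def using n0[of x]
        by (meson max.cobounded1 mult_right_mono order_trans)
    next
      case False
      have "(MA + m - 1) * a x \<le> (MA + m - 1) * (m * n x)"
        by (rule mult_left_mono_neg[OF am]) (use False in simp)
      then have "n x / 4 - a x + b x \<le> (MA' - 1/2)^2 * n x" using bm2 unfolding m_def
        by (simp add: algebra_simps power2_eq_square)
      then show ?thesis unfolding \<beta>_def using n0[of x]
        by (meson max.cobounded2 mult_right_mono order_trans)
    qed
  qed
  have partA: "op_le ip (\<lambda>x. 0) (\<lambda>x. A (A' x)) \<and> op_le ip (\<lambda>x. A (A' x)) (\<lambda>x. sm (1/4) x)"
    unfolding op_le_def using b_le Bn0 by (simp add: qP qQ)
  have partB1: "1/4 - \<beta> \<le> Pn"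
  proof -
    have "(1/4 - \<beta>) * n x0 \<le> Pn * n x0" using keyB[of x0] qP_le[of x0] by (simp add: algebra_simps)
    then show ?thesis using nx0 by simp
  qed
  have partD: "In = 3/4 + \<beta>"
  proof (rule antisym)
    have b0': "\<beta> \<ge> 0" unfolding \<beta>_def by (simp add: le_max_iff_disj)
    show "In \<le> 3/4 + \<beta>" unfolding In_def
    proof (rule pos_opnorm_le[OF LI saI posI _ _ nt])
      show "Re (ip x (x - A (A' x))) \<le> (3/4 + \<beta>) * (hnorm ip x)^2" for x
        using keyB[of x] by (simp add: qI n_def[symmetric] algebra_simps)
    qed (use b0' in simp)
  next
    define s where "s = In - 3/4"
    have sB: "n x / 4 - a x + b x \<le> s * n x" for x
      using qI_le[of x] unfolding s_def by (simp add: algebra_simps)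
    have s0: "s \<ge> 0"
    proof -
      have "0 \<le> s * n x0" using order_trans[OF Bn0[of x0] sB[of x0]] .
      show ?thesis
      proof (rule ccontr)
        assume "\<not> 0 \<le> s"
        then have "s * n x0 < 0" using nx0 by (simp add: mult_neg_pos)
        then show False using \<open>0 \<le> s * n x0\<close> by simp
      qed
    qed
    define t where "t = sqrt s"
    have t0: "t \<ge> 0" unfolding t_def using s0 by simp
    have tt: "t^2 = s" unfolding t_def using s0 by simp
    have absb: "\<bar>a x - n x / 2\<bar> \<le> t * n x" for x
    proof -
      have e: "ip x (A x - sm (1/2) x) = of_real (a x - n x / 2)"
        by (simp add: ip_diff_right ip_scale_right aIm ipxx)
      have "(a x - n x / 2)^2 = (cmod (ip x (A x - sm (1/2) x)))^2" by (simp only: e norm_of_real power2_abs)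
      also have "\<dots> \<le> (hnorm ip x * hnorm ip (A x - sm (1/2) x))^2"
        using cs[of x "A x - sm (1/2) x"] by (simp add: power_mono)
      also have "\<dots> = n x * (n x / 4 - a x + b x)" unfolding power_mult_distrib Bn n_def ..
      also have "\<dots> \<le> n x * (s * n x)" by (intro mult_left_mono sB n0)
      also have "\<dots> = (t * n x)^2" using tt by (simp add: power2_eq_square)
      finally show ?thesis using t0 n0[of x] by (simp add: power2_le_iff_abs_le)
    qed
    have MAt: "MA \<le> 1/2 + t" unfolding MA_def
    proof (rule pos_opnorm_le[OF LA saA posA _ _ nt])
      show "Re (ip x (A x)) \<le> (1/2 + t) * (hnorm ip x)^2" for x
        using absb[of x] unfolding a_def n_def by (simp add: abs_le_iff algebra_simps)
    qed (use t0 in simp)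
    have MAt': "MA' \<le> 1/2 + t" unfolding MA'_def
    proof (rule pos_opnorm_le[OF LA' saA' posA' _ _ nt])
      show "Re (ip x (A' x)) \<le> (1/2 + t) * (hnorm ip x)^2" for x
        using absb[of x] by (simp add: qA' n_def[symmetric] abs_le_iff algebra_simps)
    qed (use t0 in simp)
    have "\<bar>MA - 1/2\<bar> \<le> t" "\<bar>MA' - 1/2\<bar> \<le> t" using MAt MAt' sum1 by auto
    then have "(MA - 1/2)^2 \<le> s" "(MA' - 1/2)^2 \<le> s"
      using t0 tt by (simp_all add: power2_le_iff_abs_le[symmetric])
    then show "3/4 + \<beta> \<le> In" unfolding \<beta>_def s_def by simp
  qed
  have partC: "Pn = 1/4 \<longleftrightarrow> (1/2 :: complex) \<in> op_spectrum sm ip A"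
  proof
    assume P14: "Pn = 1/4"
    show "(1/2 :: complex) \<in> op_spectrum sm ip A"
    proof (rule ccontr)
      assume "(1/2 :: complex) \<notin> op_spectrum sm ip A"
      then obtain C where bC: "bounded_op sm ip C" and CB: "\<And>x. C (A x - sm (1/2) x) = x"
        unfolding op_spectrum_def by blast
      obtain K where K: "\<And>y. hnorm ip (C y) \<le> K * hnorm ip y"
        using bC unfolding bounded_op_def by blast
      have xB: "hnorm ip x \<le> K * hnorm ip (A x - sm (1/2) x)" for x using K[of "A x - sm (1/2) x"] CB[of x] by simp
      have Kp: "K > 0"
      proof -
        have "hnorm ip x0 > 0" using nx0 unfolding n_def by (metis hnorm_nonneg order_le_less zero_less_power2 power_0_left)
        then show ?thesis using xB[of x0] hnorm_nonneg[of "A x0 - sm (1/2) x0"]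
          by (metis not_le order_le_less_trans mult_nonpos_nonneg)
      qed
      have nB: "n x \<le> K^2 * (n x / 4 - a x + b x)" for x
      proof -
        have "n x \<le> (K * hnorm ip (A x - sm (1/2) x))^2"
          unfolding n_def using xB[of x] hnorm_nonneg by (simp add: power_mono)
        then show ?thesis unfolding power_mult_distrib Bn .
      qed
      define r where "r = 1/4 - 1/K^2"
      have rq: "a x - b x \<le> r * n x" for x
      proof -
        have "n x / K^2 \<le> n x / 4 - a x + b x" using nB[of x] Kp by (simp add: field_simps)
        then have "a x - b x \<le> n x / 4 - n x / K^2" by linarith
        also have "\<dots> = r * n x" unfolding r_def by (simp add: algebra_simps diff_divide_distrib)
        finally show ?thesis .
      qed
      have r0: "r \<ge> 0"
      proof -
        have "0 \<le> r * n x0" using rq[of x0] b_le[of x0] by simp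
        show ?thesis
        proof (rule ccontr)
          assume "\<not> 0 \<le> r"
          then have "r * n x0 < 0" using nx0 by (simp add: mult_neg_pos)
          then show False using \<open>0 \<le> r * n x0\<close> by simp
        qed
      qed
      have "Pn \<le> r" unfolding Pn_def
        by (rule pos_opnorm_le[OF LP saP posP _ r0 nt]) (use rq in \<open>simp add: qP n_def\<close>)
      moreover have "r < 1/4" unfolding r_def using Kp by simp
      ultimately show False using P14 by simp
    qed
  next
    assume sp: "(1/2 :: complex) \<in> op_spectrum sm ip A"
    show "Pn = 1/4"
    proof (rule ccontr)
      assume "Pn \<noteq> 1/4"
      then have Pl: "Pn < 1/4" using Pn_le by simp
      define c where "c = 1/4 - Pn"
      have cp: "c > 0" unfolding c_def using Pl by simp
      define B where "B = (\<lambda>x. A x - sm (1/2) x)"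
      define D where "D = (\<lambda>y. B (B y))"
      have LB: "linop B" unfolding B_def by (rule linop_sub[OF LA linop_smul])
      have LD: "linop D" unfolding D_def by (rule linop_comp[OF LB LB])
      have Deq: "D y = sm (1/4) y - A (A' y)" for y
      proof -
        have "D y = A (A y) - (sm (1/2) (A y) + sm (1/2) (A y)) + sm (1/4) y"
          unfolding D_def B_def by (simp add: linop_diff[OF LA] linop_scale[OF LA] scale_right_diff_distrib algebra_simps)
        then show ?thesis unfolding half_half A'x by (simp add: algebra_simps)
      qed
      have Bc: "c * n x \<le> (hnorm ip (B x))^2" for x
        unfolding B_def Bn c_def using qP_le[of x] by (simp add: algebra_simps)
      have Bhalf: "hnorm ip (B x) \<le> 1/2 * hnorm ip x" for x
      proof -
        have "(hnorm ip (B x))^2 \<le> (1/2 * hnorm ip x)^2"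
          unfolding B_def Bn using b_le[of x] by (simp add: n_def power_mult_distrib power2_eq_square)
        then show ?thesis using hnorm_nonneg by (meson mult_nonneg_nonneg power2_le_imp_le zero_le_divide_1_iff zero_le_numeral)
      qed
      have Dlow: "c * hnorm ip y \<le> hnorm ip (D y)" for y
      proof -
        have "ip y (D y) = of_real ((hnorm ip (B y))^2)"
          unfolding Deq qQ B_def Bn ..
        then have "(hnorm ip (B y))^2 \<le> hnorm ip y * hnorm ip (D y)"
          using cs[of y "D y"] by (simp add: norm_power)
        then have *: "c * hnorm ip y * hnorm ip y \<le> hnorm ip (D y) * hnorm ip y"
          using Bc[of y] unfolding n_def by (simp add: power2_eq_square algebra_simps)
        show ?thesis
        proof (cases "hnorm ip y = 0")
          case False
          then have "hnorm ip y > 0" using hnorm_nonneg order_le_less by metis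
          then show ?thesis using * by simp
        qed (simp add: hnorm_nonneg)
      qed
      have Dinj: "D y1 = D y2 \<Longrightarrow> y1 = y2" for y1 y2
      proof -
        assume "D y1 = D y2"
        then have "D (y1 - y2) = 0" by (simp add: linop_diff[OF LD])
        then have "c * hnorm ip (y1 - y2) \<le> 0" using Dlow[of "y1 - y2"] by simp
        then have "hnorm ip (y1 - y2) = 0" using cp hnorm_nonneg[of "y1 - y2"]
          by (simp add: mult_le_0_iff)
        then show "y1 = y2" by (simp add: hnorm_eq_0)
      qed
      have Dsurj: "\<exists>y. D y = z" for z
      proof -
        define F where "F = (\<lambda>y. sm 4 (z + A (A' y)))"
        have con: "hnorm ip (F y1 - F y2) \<le> (4 * Pn) * hnorm ip (y1 - y2)" for y1 y2
        proof -
          have "F y1 - F y2 = sm 4 (A (A' (y1 - y2)))"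
            unfolding F_def by (simp add: linop_diff[OF LP] scale_right_diff_distrib scale_right_distrib)
          then have "hnorm ip (F y1 - F y2) = 4 * hnorm ip (A (A' (y1 - y2)))" by (simp add: hnorm_scale)
          also have "\<dots> \<le> 4 * (Pn * hnorm ip (y1 - y2))"
            using opnorm_ge[OF LP boundP, of "y1 - y2"] unfolding Pn_def by simp
          finally show ?thesis by simp
        qed
        obtain L where FL: "F L = L" by (rule contraction_fix[OF hc _ con]) (use Pl in simp)
        have "sm (1/4) L = sm (1/4) (F L)" using FL by simp
        also have "\<dots> = z + A (A' L)" unfolding F_def by simp
        finally have "D L = z" unfolding Deq by simp
        then show ?thesis by blast
      qed
      define G where "G = (\<lambda>z. SOME y. D y = z)"
      have DG: "D (G z) = z" for z unfolding G_def using Dsurj[of z] by (rule someI_ex)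
      define C where "C = (\<lambda>z. B (G z))"
      have Gadd: "G (x + y) = G x + G y" for x y
        by (rule Dinj) (simp add: DG linop_add[OF LD])
      have Gsc: "G (sm k x) = sm k (G x)" for k x
        by (rule Dinj) (simp add: DG linop_scale[OF LD])
      have Gb: "hnorm ip (G z) \<le> (1/c) * hnorm ip z" for z
        using Dlow[of "G z"] cp by (simp add: DG field_simps)
      have bC: "bounded_op sm ip C"
        unfolding bounded_op_def
      proof (intro conjI allI exI)
        show "C (x + y) = C x + C y" for x y unfolding C_def Gadd by (rule linop_add[OF LB])
        show "C (sm k x) = sm k (C x)" for k x unfolding C_def Gsc by (rule linop_scale[OF LB])
        show "hnorm ip (C x) \<le> (1/(2*c)) * hnorm ip x" for x
        proof -
          have "hnorm ip (C x) \<le> 1/2 * hnorm ip (G x)" unfolding C_def by (rule Bhalf)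
          also have "\<dots> \<le> 1/2 * ((1/c) * hnorm ip x)" by (intro mult_left_mono Gb) simp
          finally show ?thesis by simp
        qed
      qed
      have GB: "G (B x) = B (G x)" for x
      proof (rule Dinj)
        have "D (B (G x)) = B (D (G x))" unfolding D_def ..
        then show "D (G (B x)) = D (B (G x))" by (simp add: DG)
      qed
      have C1: "C (A x - sm (1/2) x) = x" for x
      proof -
        have "A x - sm (1/2) x = B x" by (simp add: B_def)
        moreover have "C (B x) = B (B (G x))" unfolding C_def GB ..
        moreover have "B (B (G x)) = x" using DG[of x] unfolding D_def .
        ultimately show ?thesis by simp
      qed
      have C2: "A (C x) - sm (1/2) (C x) = x" for x
        using DG[of x] unfolding C_def D_def B_def by simp
      have "(1/2 :: complex) \<notin> op_spectrum sm ip A"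
        unfolding op_spectrum_def using bC C1 C2 by blast
      then show False using sp by simp
    qed
  qed
  show ?thesis
    using partA partB1 Pn_le partC partD unfolding Pn_def In_def MA_def MA'_def \<beta>_def by blast
qed

end

theorem mainTheorem7:
  fixes sm :: "complex \<Rightarrow> 'h::ab_group_add \<Rightarrow> 'h"
    and ip :: "'h \<Rightarrow> 'h \<Rightarrow> complex"
    and A :: "'h \<Rightarrow> 'h"
  assumes H: "complex_separable_hilbert_space sm ip"
    and nontriv: "\<exists>x::'h. x \<noteq> 0"
    and eff: "effect sm ip A"
  defines "A' \<equiv> (\<lambda>x. x - A x)"
  shows "(op_le ip (\<lambda>x. 0) (\<lambda>x. A (A' x)) \<and> op_le ip (\<lambda>x. A (A' x)) (\<lambda>x. sm (1/4) x))
    \<and> (1/4 - max ((opnorm ip A - 1/2)\<^sup>2) ((opnorm ip A' - 1/2)\<^sup>2) \<le> opnorm ip (\<lambda>x. A (A' x))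
         \<and> opnorm ip (\<lambda>x. A (A' x)) \<le> 1/4)
    \<and> (opnorm ip (\<lambda>x. A (A' x)) = 1/4 \<longleftrightarrow> (1/2 :: complex) \<in> op_spectrum sm ip A)
    \<and> opnorm ip (\<lambda>x. x - A (A' x)) = 3/4 + max ((opnorm ip A - 1/2)\<^sup>2) ((opnorm ip A' - 1/2)\<^sup>2)"
proof -
  have vs: "vector_space sm" and cip: "complex_inner_product sm ip" and hc: "hcomplete ip"
    using H unfolding complex_separable_hilbert_space_def by auto
  interpret hspace sm ip by (rule hspace.intro[OF vs cip])
  show ?thesis unfolding A'_def by (rule main[OF nontriv eff hc])
qed

end
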